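(* Under the setting of the FPI method below (with $\phi,\psi$ Lipschitz with constants $L_1,L_2$, $A+\Omega B=M-N$, $M$ nonsingular, and a solution $x^*$ of the VNCP), let $\alpha=\|M^{-1}\|$, $\beta=\|N\|+L_1+L_2\|\Omega\|$, $\gamma=\|A-\Omega B\|+L_1+L_2\|\Omega\|$, $y^*=|(A-\Omega B)x^*+\phi(x^* )-\Omega\psi(x^* )|$, and $$E_\gamma^{(k)}=\begin{bmatrix}\gamma\|x^k-x^*\|\\ \|y^k-y^*\|\end{bmatrix},\qquad T_\gamma=\begin{bmatrix}\alpha\beta & \alpha\gamma\\ \tau\alpha\beta & \tau\alpha\gamma+|1-\tau|\end{bmatrix}.$$ Then for all $k\ge0$, $\|E_\gamma^{(k+1)}\|_\infty\le\|T_\gamma\|_\infty\|E_\gamma^{(k)}\|_\infty$. Moreover, for $\tau>0$, $\|T_\gamma\|_\infty<1$ if and only if $$\alpha(\beta+\gamma)<1\quad\text{and}\quad 0<\tau<\frac{2}{\alpha(\beta+\gamma)+1}.$$ Consequently, if these conditions hold, the sequence $\{x^k\}$ generated by the FPI method converges to $x^*$ (and $x^*$ is the unique solution of the VNCP).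
   Context: The VNCP is: find $x\in\mathbb{R}^n$ with $Ax+\phi(x)\ge0$, $Bx+\psi(x)\ge0$, $(Ax+\phi(x))^T(Bx+\psi(x))=0$, where $A,B\in\mathbb{R}^{n\times n}$ and $\phi,\psi:\mathbb{R}^n\to\mathbb{R}^n$ act componentwise. $\Omega$ is a positive diagonal matrix; $\|\phi(u)-\phi(v)\|\le L_1\|u-v\|$, $\|\psi(u)-\psi(v)\|\le L_2\|u-v\|$ for all $u,v$. The FPI method with splitting $A+\Omega B=M-N$ ($M$ nonsingular) and parameter $\tau>0$ generates from any $(x^0,y^0)$: $x^{k+1}=M^{-1}[Nx^k+y^k-\phi(x^k)-\Omega\psi(x^k)]$, $y^{k+1}=(1-\tau)y^k+\tau|(A-\Omega B)x^{k+1}+\phi(x^{k+1})-\Omega\psi(x^{k+1})|$, with $|\cdot|$ componentwise absolute value. $\|\cdot\|$ is the Euclidean norm / spectral norm, and $\|\cdot\|_\infty$ is the max-norm on $\mathbb{R}^2$ and the induced (max row sum) matrix norm. *)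

theory Defs
  imports "HOL-Analysis.Analysis"
begin

definition vabs :: "real ^ 'n \<Rightarrow> real ^ 'n" where
  "vabs v = (\<chi> i. \<bar>v $ i\<bar>)"

definition snorm :: "real ^ 'n ^ 'm \<Rightarrow> real" where
  "snorm M = onorm (\<lambda>x. M *v x)"

definition pos_diag :: "real ^ 'n ^ 'n \<Rightarrow> bool" where
  "pos_diag W \<longleftrightarrow> (\<forall>i j. i \<noteq> j \<longrightarrow> W $ i $ j = 0) \<and> (\<forall>i. W $ i $ i > 0)"

definition componentwise :: "(real ^ 'n \<Rightarrow> real ^ 'n) \<Rightarrow> bool" where
  "componentwise f \<longleftrightarrow> (\<exists>g. \<forall>x. f x = (\<chi> i. g i (x $ i)))"

definition lipschitz_const :: "(real ^ 'n \<Rightarrow> real ^ 'n) \<Rightarrow> real \<Rightarrow> bool" where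
  "lipschitz_const f L \<longleftrightarrow> (\<forall>u v. norm (f u - f v) \<le> L * norm (u - v))"

definition VNCP_sol :: "real ^ 'n ^ 'n \<Rightarrow> real ^ 'n ^ 'n \<Rightarrow> (real ^ 'n \<Rightarrow> real ^ 'n)
    \<Rightarrow> (real ^ 'n \<Rightarrow> real ^ 'n) \<Rightarrow> real ^ 'n \<Rightarrow> bool" where
  "VNCP_sol A B \<phi> \<psi> x \<longleftrightarrow>
     (\<forall>i. (A *v x + \<phi> x) $ i \<ge> 0) \<and> (\<forall>i. (B *v x + \<psi> x) $ i \<ge> 0) \<and>
     (A *v x + \<phi> x) \<bullet> (B *v x + \<psi> x) = 0"

definition norm_inf2 :: "real \<Rightarrow> real \<Rightarrow> real" where
  "norm_inf2 a b = max \<bar>a\<bar> \<bar>b\<bar>"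

definition mnorm_inf2 :: "real \<Rightarrow> real \<Rightarrow> real \<Rightarrow> real \<Rightarrow> real" where
  "mnorm_inf2 t11 t12 t21 t22 = max (\<bar>t11\<bar> + \<bar>t12\<bar>) (\<bar>t21\<bar> + \<bar>t22\<bar>)"

end

theory Submission
  imports Defs
begin


lemma minv_left: assumes "invertible (M::real^'n^'n)" shows "matrix_inv M ** M = mat 1"
proof -
  have "\<exists>A'. M ** A' = mat 1 \<and> A' ** M = mat 1" using assms by (simp add: invertible_def)
  from someI_ex[OF this] show ?thesis by (simp add: matrix_inv_def)
qed

lemma snorm_bound: "norm (M *v x) \<le> snorm M * norm x"
  unfolding snorm_def by (rule onorm) simp

lemma snorm_nonneg: "snorm M \<ge> 0"
  unfolding snorm_def by (rule onorm_pos_le) simp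

lemma lip_nonneg: assumes "lipschitz_const (f::real^'n \<Rightarrow> real^'n) L" shows "L \<ge> 0"
proof -
  obtain i :: 'n where True by simp
  define u :: "real^'n" where "u = (\<chi> i. 1)"
  have "u \<noteq> 0" unfolding u_def by (metis vec_lambda_beta zero_index zero_neq_one)
  hence "norm u > 0" by simp
  moreover have "0 \<le> L * norm (u - 0)" using assms unfolding lipschitz_const_def
    by (metis norm_ge_zero order_trans)
  ultimately show ?thesis by (simp add: zero_le_mult_iff)
qed

lemma vabs_diff: "norm (vabs a - vabs b) \<le> norm (a - b)"
proof -
  have "(vabs a - vabs b) \<bullet> (vabs a - vabs b) \<le> (a - b) \<bullet> (a - b)"
    unfolding inner_vec_def vabs_def
    by (rule sum_mono) (simp add: abs_le_square_iff[symmetric] abs_triangle_ineq3 flip: power2_eq_square)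
  thus ?thesis by (simp add: norm_le)
qed

lemma T_iff:
  fixes a b c \<tau> :: real
  assumes "a\<ge>0" "b\<ge>0" "c\<ge>0" "\<tau>>0"
  shows "mnorm_inf2 (a*b) (a*c) (\<tau>*a*b) (\<tau>*a*c + \<bar>1-\<tau>\<bar>) < 1 \<longleftrightarrow>
         a*(b+c) < 1 \<and> 0<\<tau> \<and> \<tau> < 2/(a*(b+c)+1)"
proof -
  define s where "s = a*(b+c)"
  have s0: "s \<ge> 0" using assms by (simp add: s_def)
  have m: "mnorm_inf2 (a*b) (a*c) (\<tau>*a*b) (\<tau>*a*c + \<bar>1-\<tau>\<bar>) = max s (\<tau> * s + abs (1-\<tau>))"
    using assms unfolding mnorm_inf2_def s_def by (simp add: algebra_simps)
  have d: "\<tau> < 2/(s+1) \<longleftrightarrow> \<tau>*(s+1) < 2" using s0 by (simp add: pos_less_divide_eq)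
  have "max s (\<tau> * s + abs (1-\<tau>)) < 1 \<longleftrightarrow> s < 1 \<and> \<tau>*(s+1) < 2"
  proof (cases "\<tau> \<le> 1")
    case True
    have "\<tau> * s < \<tau> \<longleftrightarrow> s < 1" using assms(4) by (metis mult.right_neutral mult_less_cancel_left_pos)
    moreover have "s < 1 \<Longrightarrow> \<tau>*(s+1) < 2"
    proof -
      assume "s<1"
      have "\<tau>*(s+1) \<le> 1*(s+1)" using True s0 by (intro mult_right_mono) auto
      thus ?thesis using \<open>s<1\<close> by simp
    qed
    ultimately show ?thesis using True by (auto simp: algebra_simps)
  next
    case False
    have "s<1 \<Longrightarrow> \<tau> * s + \<tau> - 1 < 1 \<Longrightarrow> \<tau>*(s+1) < 2" by (simp add: algebra_simps)
    moreover have "\<tau>*(s+1) < 2 \<Longrightarrow> s < 1"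
    proof -
      assume h: "\<tau>*(s+1) < 2"
      have "1*(s+1) < \<tau>*(s+1)" using False s0 by (intro mult_strict_right_mono) auto
      thus ?thesis using h by simp
    qed
    ultimately show ?thesis using False by (auto simp: algebra_simps)
  qed
  thus ?thesis using m d assms(4) by (simp add: s_def)
qed

lemma diag_mult: assumes "pos_diag W" shows "(W *v v) $ i = W $ i $ i * v $ i"
proof -
  have "(\<Sum>j\<in>UNIV. W $ i $ j * v $ j) = (\<Sum>j\<in>UNIV. if j = i then W $ i $ i * v $ i else 0)"
    by (rule sum.cong) (use assms in \<open>auto simp: pos_diag_def\<close>)
  thus ?thesis by (simp add: matrix_vector_mult_def)
qed

lemma sol_ys:
  assumes W: "pos_diag W" and sol: "VNCP_sol A B \<phi> \<psi> xs" and split: "A + W ** B = M - N"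
  shows "vabs ((A - W ** B) *v xs + \<phi> xs - W *v \<psi> xs) = M *v xs - N *v xs + \<phi> xs + W *v \<psi> xs"
proof -
  define u where "u = A *v xs + \<phi> xs"
  define v where "v = B *v xs + \<psi> xs"
  have u0: "\<And>i. u $ i \<ge> 0" and v0: "\<And>i. v $ i \<ge> 0" and uv: "u \<bullet> v = 0"
    using sol unfolding VNCP_sol_def u_def v_def by auto
  have "(\<Sum>i\<in>UNIV. u $ i * v $ i) = 0" using uv by (simp add: inner_vec_def)
  hence uvi: "\<And>i. u $ i * v $ i = 0"
    using sum_nonneg_eq_0_iff[of UNIV "\<lambda>i. u $ i * v $ i"] u0 v0 by auto
  have e1: "(A - W ** B) *v xs + \<phi> xs - W *v \<psi> xs = u - W *v v"
    unfolding u_def v_def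
    by (simp add: matrix_vector_mult_diff_rdistrib matrix_vector_right_distrib matrix_vector_mul_assoc)
  have e2: "vabs (u - W *v v) = u + W *v v"
  proof -
    have "\<bar>u $ i - W $ i $ i * v $ i\<bar> = u $ i + W $ i $ i * v $ i" for i
    proof -
      have "W $ i $ i > 0" using W by (simp add: pos_diag_def)
      thus ?thesis using uvi[of i] u0[of i] v0[of i] by (cases "u $ i = 0") auto
    qed
    thus ?thesis unfolding vabs_def by (simp add: vec_eq_iff diag_mult[OF W])
  qed
  have e3: "u + W *v v = (A + W ** B) *v xs + \<phi> xs + W *v \<psi> xs"
    unfolding u_def v_def
    by (simp add: matrix_vector_mult_add_rdistrib matrix_vector_right_distrib matrix_vector_mul_assoc algebra_simps)
  show ?thesis unfolding e1 e2 e3 split by (simp add: matrix_vector_mult_diff_rdistrib)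
qed

lemma sol_fix:
  assumes W: "pos_diag W" and sol: "VNCP_sol A B \<phi> \<psi> xs" and split: "A + W ** B = M - N"
    and Minv: "invertible M"
  shows "xs = matrix_inv M *v (N *v xs + vabs ((A - W ** B) *v xs + \<phi> xs - W *v \<psi> xs) - \<phi> xs - W *v \<psi> xs)"
proof -
  have "N *v xs + vabs ((A - W ** B) *v xs + \<phi> xs - W *v \<psi> xs) - \<phi> xs - W *v \<psi> xs = M *v xs"
    unfolding sol_ys[OF W sol split] by simp
  thus ?thesis by (simp add: matrix_vector_mul_assoc minv_left[OF Minv])
qed

lemma one_step:
  fixes C N Mi W :: "real^'n^'n" and \<phi> \<psi> :: "real^'n \<Rightarrow> real^'n"
  assumes L1: "lipschitz_const \<phi> L1" and L2: "lipschitz_const \<psi> L2" and tau: "\<tau> > 0"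
    and hx: "x1 = Mi *v (N *v x0 + y0 - \<phi> x0 - W *v \<psi> x0)"
    and hy: "y1 = (1 - \<tau>) *\<^sub>R y0 + \<tau> *\<^sub>R vabs (C *v x1 + \<phi> x1 - W *v \<psi> x1)"
    and hxs: "xs = Mi *v (N *v xs + ys - \<phi> xs - W *v \<psi> xs)"
    and hys: "ys = vabs (C *v xs + \<phi> xs - W *v \<psi> xs)"
    and g: "g \<ge> snorm C + L1 + L2 * snorm W"
  shows "norm_inf2 (g * norm (x1 - xs)) (norm (y1 - ys))
    \<le> mnorm_inf2 (snorm Mi * (snorm N + L1 + L2 * snorm W)) (snorm Mi * g)
         (\<tau> * snorm Mi * (snorm N + L1 + L2 * snorm W)) (\<tau> * snorm Mi * g + \<bar>1 - \<tau>\<bar>)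
       * norm_inf2 (g * norm (x0 - xs)) (norm (y0 - ys))"
proof -
  define \<alpha> where "\<alpha> = snorm Mi"
  define \<beta> where "\<beta> = snorm N + L1 + L2 * snorm W"
  define \<gamma> where "\<gamma> = snorm C + L1 + L2 * snorm W"
  define e0 where "e0 = norm (x0 - xs)"
  define d0 where "d0 = norm (y0 - ys)"
  define e1 where "e1 = norm (x1 - xs)"
  define d1 where "d1 = norm (y1 - ys)"
  define E where "E = max (g * e0) d0"
  have L10: "L1 \<ge> 0" using lip_nonneg[OF L1] .
  have L20: "L2 \<ge> 0" using lip_nonneg[OF L2] .
  have a0: "\<alpha> \<ge> 0" by (simp add: \<alpha>_def snorm_nonneg)
  have b0: "\<beta> \<ge> 0" using L10 L20 by (simp add: \<beta>_def snorm_nonneg)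
  have c0: "\<gamma> \<ge> 0" using L10 L20 by (simp add: \<gamma>_def snorm_nonneg)
  have g0: "g \<ge> 0" using g c0 \<gamma>_def by linarith
  have e00: "e0 \<ge> 0" "d0 \<ge> 0" "e1 \<ge> 0" "d1 \<ge> 0" by (simp_all add: e0_def d0_def e1_def d1_def)
  have lp1: "norm (\<phi> u - \<phi> v) \<le> L1 * norm (u - v)" for u v using L1 by (simp add: lipschitz_const_def)
  have lp2: "norm (\<psi> u - \<psi> v) \<le> L2 * norm (u - v)" for u v using L2 by (simp add: lipschitz_const_def)
  have lpW: "norm (W *v (\<psi> u - \<psi> v)) \<le> snorm W * (L2 * norm (u - v))" for u v
    using snorm_bound[of W "\<psi> u - \<psi> v"] lp2[of u v] snorm_nonneg[of W]
    by (meson mult_left_mono order_trans)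
  have dx: "x1 - xs = Mi *v (N *v (x0 - xs) + (y0 - ys) - (\<phi> x0 - \<phi> xs) - W *v (\<psi> x0 - \<psi> xs))"
  proof -
    have "x1 - xs = Mi *v (N *v x0 + y0 - \<phi> x0 - W *v \<psi> x0) - Mi *v (N *v xs + ys - \<phi> xs - W *v \<psi> xs)"
      using hx hxs by (rule arg_cong2[where f="(-)"])
    also have "\<dots> = Mi *v ((N *v x0 + y0 - \<phi> x0 - W *v \<psi> x0) - (N *v xs + ys - \<phi> xs - W *v \<psi> xs))"
      by (simp only: matrix_vector_mult_diff_distrib)
    also have "(N *v x0 + y0 - \<phi> x0 - W *v \<psi> x0) - (N *v xs + ys - \<phi> xs - W *v \<psi> xs)
       = N *v (x0 - xs) + (y0 - ys) - (\<phi> x0 - \<phi> xs) - W *v (\<psi> x0 - \<psi> xs)"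
      by (simp add: matrix_vector_mult_diff_distrib algebra_simps)
    finally show ?thesis .
  qed
  have "norm (N *v (x0 - xs) + (y0 - ys) - (\<phi> x0 - \<phi> xs) - W *v (\<psi> x0 - \<psi> xs))
        \<le> norm (N *v (x0 - xs)) + norm (y0 - ys) + norm (\<phi> x0 - \<phi> xs) + norm (W *v (\<psi> x0 - \<psi> xs))"
    by (smt (verit) norm_triangle_ineq norm_triangle_ineq4)
  also have "\<dots> \<le> snorm N * e0 + d0 + L1 * e0 + snorm W * (L2 * e0)"
    using snorm_bound[of N "x0 - xs"] lp1[of x0 xs] lpW[of x0 xs] by (simp add: e0_def d0_def)
  also have "\<dots> = \<beta> * e0 + d0" by (simp add: \<beta>_def algebra_simps)
  finally have nx: "norm (N *v (x0 - xs) + (y0 - ys) - (\<phi> x0 - \<phi> xs) - W *v (\<psi> x0 - \<psi> xs)) \<le> \<beta> * e0 + d0" .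
  have e1b: "e1 \<le> \<alpha> * (\<beta> * e0 + d0)"
    unfolding e1_def dx \<alpha>_def
    by (rule order_trans[OF snorm_bound]) (rule mult_left_mono[OF nx snorm_nonneg])
  have dy: "y1 - ys = (1 - \<tau>) *\<^sub>R (y0 - ys) + \<tau> *\<^sub>R (vabs (C *v x1 + \<phi> x1 - W *v \<psi> x1) - vabs (C *v xs + \<phi> xs - W *v \<psi> xs))"
  proof -
    have "ys = (1 - \<tau>) *\<^sub>R ys + \<tau> *\<^sub>R ys" by (simp add: algebra_simps)
    hence "y1 - ys = ((1 - \<tau>) *\<^sub>R y0 + \<tau> *\<^sub>R vabs (C *v x1 + \<phi> x1 - W *v \<psi> x1)) - ((1 - \<tau>) *\<^sub>R ys + \<tau> *\<^sub>R ys)"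
      using hy by simp
    thus ?thesis using hys by (simp add: algebra_simps)
  qed
  have zd: "(C *v x1 + \<phi> x1 - W *v \<psi> x1) - (C *v xs + \<phi> xs - W *v \<psi> xs)
      = C *v (x1 - xs) + (\<phi> x1 - \<phi> xs) - W *v (\<psi> x1 - \<psi> xs)"
    by (simp add: matrix_vector_mult_diff_distrib algebra_simps)
  have "norm (C *v (x1 - xs) + (\<phi> x1 - \<phi> xs) - W *v (\<psi> x1 - \<psi> xs))
      \<le> norm (C *v (x1 - xs)) + norm (\<phi> x1 - \<phi> xs) + norm (W *v (\<psi> x1 - \<psi> xs))"
    by (smt (verit) norm_triangle_ineq norm_triangle_ineq4)
  also have "\<dots> \<le> snorm C * e1 + L1 * e1 + snorm W * (L2 * e1)"
    using snorm_bound[of C "x1 - xs"] lp1[of x1 xs] lpW[of x1 xs] by (simp add: e1_def)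
  also have "\<dots> = \<gamma> * e1" by (simp add: \<gamma>_def algebra_simps)
  finally have nz: "norm (vabs (C *v x1 + \<phi> x1 - W *v \<psi> x1) - vabs (C *v xs + \<phi> xs - W *v \<psi> xs)) \<le> \<gamma> * e1"
    using vabs_diff zd by (metis order_trans)
  have "d1 \<le> norm ((1 - \<tau>) *\<^sub>R (y0 - ys)) + norm (\<tau> *\<^sub>R (vabs (C *v x1 + \<phi> x1 - W *v \<psi> x1) - vabs (C *v xs + \<phi> xs - W *v \<psi> xs)))"
    unfolding d1_def dy by (rule norm_triangle_ineq)
  also have "\<dots> \<le> \<bar>1 - \<tau>\<bar> * d0 + \<tau> * (\<gamma> * e1)"
    using nz tau by (simp add: d0_def)
  finally have d1b: "d1 \<le> \<bar>1 - \<tau>\<bar> * d0 + \<tau> * (\<gamma> * e1)" .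
  have gE: "g * e0 \<le> E" "d0 \<le> E" by (simp_all add: E_def)
  have E0: "E \<ge> 0" using e00 gE by linarith
  have r1: "g * e1 \<le> (\<alpha> * \<beta> + \<alpha> * g) * E"
  proof -
    have "g * e1 \<le> g * (\<alpha> * (\<beta> * e0 + d0))" using e1b g0 by (rule mult_left_mono)
    also have "\<dots> = \<alpha> * \<beta> * (g * e0) + \<alpha> * g * d0" by (simp add: algebra_simps)
    also have "\<dots> \<le> \<alpha> * \<beta> * E + \<alpha> * g * E"
      using gE a0 b0 g0 by (intro add_mono mult_left_mono) auto
    finally show ?thesis by (simp add: algebra_simps)
  qed
  have "\<gamma> * e1 \<le> g * e1" using g e00 \<gamma>_def by (intro mult_right_mono) auto
  hence "d1 \<le> \<bar>1 - \<tau>\<bar> * d0 + \<tau> * ((\<alpha> * \<beta> + \<alpha> * g) * E)"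
    using d1b r1 tau by (smt (verit) mult_left_mono)
  also have "\<dots> \<le> \<bar>1 - \<tau>\<bar> * E + \<tau> * ((\<alpha> * \<beta> + \<alpha> * g) * E)"
    using gE a0 b0 g0 tau by (intro add_mono mult_left_mono) auto
  finally have r2: "d1 \<le> (\<tau> * \<alpha> * \<beta> + (\<tau> * \<alpha> * g + \<bar>1 - \<tau>\<bar>)) * E"
    by (simp add: algebra_simps)
  have mn: "mnorm_inf2 (\<alpha> * \<beta>) (\<alpha> * g) (\<tau> * \<alpha> * \<beta>) (\<tau> * \<alpha> * g + \<bar>1 - \<tau>\<bar>)
      = max (\<alpha> * \<beta> + \<alpha> * g) (\<tau> * \<alpha> * \<beta> + (\<tau> * \<alpha> * g + \<bar>1 - \<tau>\<bar>))"
    unfolding mnorm_inf2_def using a0 b0 g0 tau by simp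
  have "norm_inf2 (g * e1) d1 = max (g * e1) d1" using g0 e00 by (simp add: norm_inf2_def)
  also have "\<dots> \<le> max (\<alpha> * \<beta> + \<alpha> * g) (\<tau> * \<alpha> * \<beta> + (\<tau> * \<alpha> * g + \<bar>1 - \<tau>\<bar>)) * E"
    using r1 r2 E0 by (smt (verit) max.cobounded1 max.cobounded2 mult_right_mono)
  also have "E = norm_inf2 (g * e0) d0" using g0 e00 by (simp add: norm_inf2_def E_def)
  finally show ?thesis unfolding mn[symmetric]
    by (simp add: \<alpha>_def \<beta>_def e0_def d0_def e1_def d1_def)
qed


theorem theorem3p2:
  fixes A B W M N :: "real ^ 'n ^ 'n"
    and \<phi> \<psi> :: "real ^ 'n \<Rightarrow> real ^ 'n"
    and L1 L2 \<tau> :: real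
    and x y :: "nat \<Rightarrow> real ^ 'n"
    and xs :: "real ^ 'n"
  assumes W: "pos_diag W"
    and phi_cw: "componentwise \<phi>" and psi_cw: "componentwise \<psi>"
    and L1: "lipschitz_const \<phi> L1" and L2: "lipschitz_const \<psi> L2"
    and split: "A + W ** B = M - N"
    and Minv: "invertible M"
    and tau: "\<tau> > 0"
    and xrec: "\<And>k. x (Suc k) = matrix_inv M *v (N *v x k + y k - \<phi> (x k) - W *v \<psi> (x k))"
    and yrec: "\<And>k. y (Suc k) = (1 - \<tau>) *\<^sub>R y k
                  + \<tau> *\<^sub>R vabs ((A - W ** B) *v x (Suc k) + \<phi> (x (Suc k)) - W *v \<psi> (x (Suc k)))"
    and sol: "VNCP_sol A B \<phi> \<psi> xs"
  defines "\<alpha> \<equiv> snorm (matrix_inv M)"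
    and "\<beta> \<equiv> snorm N + L1 + L2 * snorm W"
    and "\<gamma> \<equiv> snorm (A - W ** B) + L1 + L2 * snorm W"
    and "ys \<equiv> vabs ((A - W ** B) *v xs + \<phi> xs - W *v \<psi> xs)"
  shows "(\<forall>k. norm_inf2 (\<gamma> * norm (x (Suc k) - xs)) (norm (y (Suc k) - ys))
              \<le> mnorm_inf2 (\<alpha> * \<beta>) (\<alpha> * \<gamma>) (\<tau> * \<alpha> * \<beta>) (\<tau> * \<alpha> * \<gamma> + \<bar>1 - \<tau>\<bar>)
                * norm_inf2 (\<gamma> * norm (x k - xs)) (norm (y k - ys)))
       \<and> (mnorm_inf2 (\<alpha> * \<beta>) (\<alpha> * \<gamma>) (\<tau> * \<alpha> * \<beta>) (\<tau> * \<alpha> * \<gamma> + \<bar>1 - \<tau>\<bar>) < 1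
            \<longleftrightarrow> \<alpha> * (\<beta> + \<gamma>) < 1 \<and> 0 < \<tau> \<and> \<tau> < 2 / (\<alpha> * (\<beta> + \<gamma>) + 1))
       \<and> (\<alpha> * (\<beta> + \<gamma>) < 1 \<and> 0 < \<tau> \<and> \<tau> < 2 / (\<alpha> * (\<beta> + \<gamma>) + 1)
            \<longrightarrow> x \<longlonglongrightarrow> xs \<and> (\<forall>z. VNCP_sol A B \<phi> \<psi> z \<longrightarrow> z = xs))"
proof -
  have L10: "L1 \<ge> 0" using lip_nonneg[OF L1] .
  have L20: "L2 \<ge> 0" using lip_nonneg[OF L2] .
  have a0: "\<alpha> \<ge> 0" by (simp add: \<alpha>_def snorm_nonneg)
  have b0: "\<beta> \<ge> 0" using L10 L20 by (simp add: \<beta>_def snorm_nonneg)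
  have c0: "\<gamma> \<ge> 0" using L10 L20 by (simp add: \<gamma>_def snorm_nonneg)
  have hys: "ys = vabs ((A - W ** B) *v xs + \<phi> xs - W *v \<psi> xs)" by (simp add: ys_def)
  have hxs: "xs = matrix_inv M *v (N *v xs + ys - \<phi> xs - W *v \<psi> xs)"
    using sol_fix[OF W sol split Minv] by (simp add: ys_def)
  have step: "norm_inf2 (g * norm (x (Suc k) - xs)) (norm (y (Suc k) - ys))
     \<le> mnorm_inf2 (\<alpha> * \<beta>) (\<alpha> * g) (\<tau> * \<alpha> * \<beta>) (\<tau> * \<alpha> * g + \<bar>1 - \<tau>\<bar>)
       * norm_inf2 (g * norm (x k - xs)) (norm (y k - ys))" if "g \<ge> \<gamma>" for g k
    using one_step[OF L1 L2 tau xrec yrec hxs hys, of g] that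
    unfolding \<alpha>_def \<beta>_def \<gamma>_def by simp
  have P1: "\<forall>k. norm_inf2 (\<gamma> * norm (x (Suc k) - xs)) (norm (y (Suc k) - ys))
              \<le> mnorm_inf2 (\<alpha> * \<beta>) (\<alpha> * \<gamma>) (\<tau> * \<alpha> * \<beta>) (\<tau> * \<alpha> * \<gamma> + \<bar>1 - \<tau>\<bar>)
                * norm_inf2 (\<gamma> * norm (x k - xs)) (norm (y k - ys))"
    using step[of \<gamma>] by simp
  have P2: "mnorm_inf2 (\<alpha> * \<beta>) (\<alpha> * \<gamma>) (\<tau> * \<alpha> * \<beta>) (\<tau> * \<alpha> * \<gamma> + \<bar>1 - \<tau>\<bar>) < 1
            \<longleftrightarrow> \<alpha> * (\<beta> + \<gamma>) < 1 \<and> 0 < \<tau> \<and> \<tau> < 2 / (\<alpha> * (\<beta> + \<gamma>) + 1)"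
    by (rule T_iff[OF a0 b0 c0 tau])
  have P3: "x \<longlonglongrightarrow> xs \<and> (\<forall>z. VNCP_sol A B \<phi> \<psi> z \<longrightarrow> z = xs)"
    if cond: "\<alpha> * (\<beta> + \<gamma>) < 1" "\<tau> < 2 / (\<alpha> * (\<beta> + \<gamma>) + 1)"
  proof -
    define s where "s = \<alpha> * (\<beta> + \<gamma>)"
    have s0: "s \<ge> 0" using a0 b0 c0 by (simp add: s_def)
    have "\<tau> * (s + 1) < 2" using cond(2) s0 by (simp add: s_def pos_less_divide_eq)
    hence s2: "s + 1 < 2 / \<tau>" using tau by (simp add: pos_less_divide_eq mult.commute)
    define \<delta> where "\<delta> = min (1 - s) (2 / \<tau> - 1 - s)"
    have d0: "\<delta> > 0" using cond(1) s2 by (simp add: \<delta>_def s_def)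
    define g where "g = \<gamma> + \<delta> / (2 * (\<alpha> + 1))"
    have gg: "g \<ge> \<gamma>" using d0 a0 by (simp add: g_def)
    have "\<delta> / (2 * (\<alpha> + 1)) > 0" using d0 a0 by simp
    hence g0: "g > 0" using c0 by (simp add: g_def)
    have "\<alpha> * (\<delta> / (2 * (\<alpha> + 1))) < \<delta>"
    proof -
      have "\<alpha> * (\<delta> / (2 * (\<alpha> + 1))) = \<delta> * (\<alpha> / (2 * (\<alpha> + 1)))" by simp
      also have "\<alpha> / (2 * (\<alpha> + 1)) < 1" using a0 by (simp add: divide_less_eq)
      hence "\<delta> * (\<alpha> / (2 * (\<alpha> + 1))) < \<delta> * 1" using d0 by (intro mult_strict_left_mono) auto
      finally show ?thesis by simp
    qed
    hence sg: "\<alpha> * (\<beta> + g) < s + \<delta>" by (simp add: g_def s_def algebra_simps)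
    have sg1: "\<alpha> * (\<beta> + g) < 1" and sg2: "\<alpha> * (\<beta> + g) + 1 < 2 / \<tau>"
      using sg by (auto simp: \<delta>_def)
    have "\<tau> < 2 / (\<alpha> * (\<beta> + g) + 1)"
    proof -
      have "\<tau> * (\<alpha> * (\<beta> + g) + 1) < 2" using sg2 tau by (simp add: pos_less_divide_eq mult.commute)
      moreover have "\<alpha> * (\<beta> + g) \<ge> 0" using a0 b0 g0 by simp
      hence "\<alpha> * (\<beta> + g) + 1 > 0" by linarith
      ultimately show ?thesis by (simp add: pos_less_divide_eq)
    qed
    hence rho1: "mnorm_inf2 (\<alpha> * \<beta>) (\<alpha> * g) (\<tau> * \<alpha> * \<beta>) (\<tau> * \<alpha> * g + \<bar>1 - \<tau>\<bar>) < 1"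
      using T_iff[OF a0 b0 less_imp_le[OF g0] tau] sg1 tau by simp
    define \<rho> where "\<rho> = mnorm_inf2 (\<alpha> * \<beta>) (\<alpha> * g) (\<tau> * \<alpha> * \<beta>) (\<tau> * \<alpha> * g + \<bar>1 - \<tau>\<bar>)"
    have rho0: "\<rho> \<ge> 0" by (simp add: \<rho>_def mnorm_inf2_def le_max_iff_disj)
    have r1: "\<rho> < 1" using rho1 by (simp add: \<rho>_def)
    define E where "E k = norm_inf2 (g * norm (x k - xs)) (norm (y k - ys))" for k
    have Es: "E (Suc k) \<le> \<rho> * E k" for k unfolding E_def \<rho>_def by (rule step[OF gg])
    have Ek: "E k \<le> \<rho> ^ k * E 0" for k
    proof (induction k)
      case 0 thus ?case by simp
    next
      case (Suc k)
      have "E (Suc k) \<le> \<rho> * E k" by (rule Es)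
      also have "\<dots> \<le> \<rho> * (\<rho> ^ k * E 0)" using Suc rho0 by (rule mult_left_mono)
      finally show ?case by simp
    qed
    have xb: "norm (x k - xs) \<le> \<rho> ^ k * E 0 / g" for k
    proof -
      have "g * norm (x k - xs) \<le> E k" by (simp add: E_def norm_inf2_def)
      hence "g * norm (x k - xs) \<le> \<rho> ^ k * E 0" using Ek[of k] by linarith
      thus ?thesis using g0 by (simp add: le_divide_eq mult.commute)
    qed
    have "(\<lambda>k. \<rho> ^ k * E 0 / g) \<longlonglongrightarrow> 0"
    proof -
      have "(\<lambda>k. \<rho> ^ k) \<longlonglongrightarrow> 0" using rho0 r1 by (intro LIMSEQ_power_zero) simp
      hence "(\<lambda>k. \<rho> ^ k * (E 0 / g)) \<longlonglongrightarrow> 0 * (E 0 / g)" by (intro tendsto_mult) auto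
      thus ?thesis by simp
    qed
    note lim = this
    have "(\<lambda>k. x k - xs) \<longlonglongrightarrow> 0"
      by (rule Lim_null_comparison[OF _ lim]) (simp add: xb)
    hence conv: "x \<longlonglongrightarrow> xs" by (rule LIM_zero_cancel)
    have uniq: "z = xs" if zs: "VNCP_sol A B \<phi> \<psi> z" for z
    proof -
      define yz where "yz = vabs ((A - W ** B) *v z + \<phi> z - W *v \<psi> z)"
      have hz: "z = matrix_inv M *v (N *v z + yz - \<phi> z - W *v \<psi> z)"
        using sol_fix[OF W zs split Minv] by (simp add: yz_def)
      have hyz: "yz = (1 - \<tau>) *\<^sub>R yz + \<tau> *\<^sub>R vabs ((A - W ** B) *v z + \<phi> z - W *v \<psi> z)"
        by (simp add: yz_def algebra_simps)
      have "norm_inf2 (g * norm (z - xs)) (norm (yz - ys)) \<le> \<rho> * norm_inf2 (g * norm (z - xs)) (norm (yz - ys))"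
        using one_step[OF L1 L2 tau hz hyz hxs hys, of g] gg
        unfolding \<rho>_def \<alpha>_def \<beta>_def \<gamma>_def by simp
      moreover have "norm_inf2 (g * norm (z - xs)) (norm (yz - ys)) \<ge> 0" by (simp add: norm_inf2_def)
      ultimately have "norm_inf2 (g * norm (z - xs)) (norm (yz - ys)) \<le> 0" using r1
        by (smt (verit) mult_less_cancel_right2)
      hence "g * norm (z - xs) \<le> 0" unfolding norm_inf2_def by linarith
      hence "norm (z - xs) \<le> 0" using g0 by (simp add: mult_le_0_iff)
      thus ?thesis by simp
    qed
    show ?thesis using conv uniq by blast
  qed
  show ?thesis using P1 P2 P3 tau by blast
qed

end
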